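(* Let $h\in\mathbb N$ and $u,v\in\mathfrak S_n$ with $u<v$, and let $F$ be an $h$-flipclass of paths from $u$ to $v$. Suppose that for all $i\in[h-1]$ and all vertices $(a,i-1),(b,i+1)$ of $TS_F$, the interval $[(a,i-1),(b,i+1)]$ in the poset induced by $TS_F$, if nonempty, is a diamond (i.e. contains exactly two elements besides its endpoints). For $i\in[h-1]$ define $\bar f_i$ on the set $P^{TS_F}_h((u,0),(v,h))$ of paths of length $h$ from $(u,0)$ to $(v,h)$ in $TS_F$ by sending $((a_0,0),\dots,(a_h,h))$ to the path obtained by replacing $(a_i,i)$ with the other middle element of the diamond $[(a_{i-1},i-1),(a_{i+1},i+1)]$. Then $\bar f_i$ is well defined and the map $i_{TS_F}$ is equivariant: $i_{TS_F}(f_i(\Gamma))=\bar f_i(i_{TS_F}(\Gamma))$ for all $\Gamma\in F$ and $i\in[h-1]$.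
   Context: $\mathfrak S_n$ is the symmetric group on $[n]$, $T$ its transpositions, $\ell$ the length w.r.t. simple transpositions. The Bruhat graph $B(\mathfrak S_n)$ has an edge $x\xrightarrow{t}y$ iff $yx^{-1}=t\in T$ and $\ell(x)<\ell(y)$; Bruhat order: $x\le y$ iff there is a directed path from $x$ to $y$. $P_h(u,v)$ is the set of paths $u=x_0\to\cdots\to x_h=v$ of length $h$. Between two fixed vertices there are $0$ or $2$ paths of length $2$, each the flip of the other; the $i$-th flip operator $f_i$ on $P_h(u,v)$ replaces $x_{i-1}\to x_i\to x_{i+1}$ by its flip; orbits of $\langle f_1,\dots,f_{h-1}\rangle$ on $P_h(u,v)$ are the $h$-flipclasses of paths from $u$ to $v$. The time-support graph $TS_F$ has vertices $(a,i)$ ($0\le i\le h$) such that some path $(x_0,\dots,x_h)\in F$ has $x_i=a$, and edges $(a,i)\xrightarrow{t}(b,i+1)$ whenever some path of $F$ contains $x_i=a\xrightarrow{t}b=x_{i+1}$; it is acyclic and induces a partial order on its vertices (reachability). The map $i_{TS_F}:F\to P^{TS_F}_h((u,0),(v,h))$ sends $(x_0,\dots,x_h)$ to $((x_0,0),\dots,(x_h,h))$. *)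

theory Defs
  imports "HOL-Combinatorics.Permutations"
begin

text \<open>Permutations of [n] = {1..n}, represented as functions nat => nat that permute {1..n}.
  Products are function composition: (x y)(k) = x (y k).\<close>

definition Sym :: "nat \<Rightarrow> (nat \<Rightarrow> nat) set" where
  "Sym n = {p. p permutes {1..n}}"

definition Transp :: "nat \<Rightarrow> (nat \<Rightarrow> nat) set" where
  "Transp n = {Transposition.transpose i j | i j. i \<in> {1..n} \<and> j \<in> {1..n} \<and> i \<noteq> j}"

definition len :: "nat \<Rightarrow> (nat \<Rightarrow> nat) \<Rightarrow> nat" where
  "len n w = (LEAST k. \<exists>ss. length ss = k \<and> set ss \<subseteq> {1..<n} \<and>
       w = foldr (\<lambda>s acc. Transposition.transpose s (Suc s) \<circ> acc) ss id)"

definition bedge :: "nat \<Rightarrow> (nat \<Rightarrow> nat) \<Rightarrow> (nat \<Rightarrow> nat) \<Rightarrow> bool" where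
  "bedge n x y \<longleftrightarrow> x \<in> Sym n \<and> y \<in> Sym n \<and> y \<circ> inv x \<in> Transp n \<and> len n x < len n y"

definition bruhat_less :: "nat \<Rightarrow> (nat \<Rightarrow> nat) \<Rightarrow> (nat \<Rightarrow> nat) \<Rightarrow> bool" where
  "bruhat_less n x y \<longleftrightarrow> (x, y) \<in> {(a, b). bedge n a b}\<^sup>+"

definition Paths :: "nat \<Rightarrow> nat \<Rightarrow> (nat \<Rightarrow> nat) \<Rightarrow> (nat \<Rightarrow> nat) \<Rightarrow> (nat \<Rightarrow> nat) list set" where
  "Paths n h u v = {p. length p = Suc h \<and> p ! 0 = u \<and> p ! h = v \<and>
       (\<forall>i<h. bedge n (p ! i) (p ! Suc i))}"

definition flip :: "nat \<Rightarrow> nat \<Rightarrow> (nat \<Rightarrow> nat) list \<Rightarrow> (nat \<Rightarrow> nat) list" where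
  "flip n i p = p[i := (THE z. z \<noteq> p ! i \<and> bedge n (p ! (i - 1)) z \<and> bedge n z (p ! Suc i))]"

definition flip_step :: "nat \<Rightarrow> nat \<Rightarrow> (nat \<Rightarrow> nat) \<Rightarrow> (nat \<Rightarrow> nat) \<Rightarrow>
    ((nat \<Rightarrow> nat) list \<times> (nat \<Rightarrow> nat) list) set" where
  "flip_step n h u v = {(p, flip n i p) | p i. p \<in> Paths n h u v \<and> i \<in> {1..h-1}}"

text \<open>h-flipclasses: orbits of the group generated by the (involutive) flips f_1..f_{h-1}.\<close>
definition flipclass :: "nat \<Rightarrow> nat \<Rightarrow> (nat \<Rightarrow> nat) \<Rightarrow> (nat \<Rightarrow> nat) \<Rightarrow>
    (nat \<Rightarrow> nat) list set \<Rightarrow> bool" where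
  "flipclass n h u v F \<longleftrightarrow>
     (\<exists>p \<in> Paths n h u v. F = {q. (p, q) \<in> (flip_step n h u v)\<^sup>*})"

definition TSV :: "nat \<Rightarrow> (nat \<Rightarrow> nat) list set \<Rightarrow> ((nat \<Rightarrow> nat) \<times> nat) set" where
  "TSV h F = {(p ! i, i) | p i. p \<in> F \<and> i \<le> h}"

definition TSE :: "nat \<Rightarrow> (nat \<Rightarrow> nat) list set \<Rightarrow>
    (((nat \<Rightarrow> nat) \<times> nat) \<times> ((nat \<Rightarrow> nat) \<times> nat)) set" where
  "TSE h F = {((p ! i, i), (p ! Suc i, Suc i)) | p i. p \<in> F \<and> i < h}"

definition TS_le :: "nat \<Rightarrow> (nat \<Rightarrow> nat) list set \<Rightarrow> (nat \<Rightarrow> nat) \<times> nat \<Rightarrow> (nat \<Rightarrow> nat) \<times> nat \<Rightarrow> bool" where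
  "TS_le h F A B \<longleftrightarrow> A \<in> TSV h F \<and> B \<in> TSV h F \<and> (A, B) \<in> (TSE h F)\<^sup>*"

definition TS_interval :: "nat \<Rightarrow> (nat \<Rightarrow> nat) list set \<Rightarrow> (nat \<Rightarrow> nat) \<times> nat \<Rightarrow> (nat \<Rightarrow> nat) \<times> nat
    \<Rightarrow> ((nat \<Rightarrow> nat) \<times> nat) set" where
  "TS_interval h F A B = {X. TS_le h F A X \<and> TS_le h F X B}"

definition TSPaths :: "nat \<Rightarrow> (nat \<Rightarrow> nat) list set \<Rightarrow> (nat \<Rightarrow> nat) \<Rightarrow> (nat \<Rightarrow> nat) \<Rightarrow>
    ((nat \<Rightarrow> nat) \<times> nat) list set" where
  "TSPaths h F u v = {Q. length Q = Suc h \<and> Q ! 0 = (u, 0) \<and> Q ! h = (v, h) \<and>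
       (\<forall>i<h. (Q ! i, Q ! Suc i) \<in> TSE h F)}"

definition other_mid :: "nat \<Rightarrow> (nat \<Rightarrow> nat) list set \<Rightarrow> nat \<Rightarrow> ((nat \<Rightarrow> nat) \<times> nat) list
    \<Rightarrow> (nat \<Rightarrow> nat) \<times> nat \<Rightarrow> bool" where
  "other_mid h F i Q z \<longleftrightarrow> z \<in> TS_interval h F (Q ! (i - 1)) (Q ! Suc i) \<and>
       z \<noteq> Q ! (i - 1) \<and> z \<noteq> Q ! Suc i \<and> z \<noteq> Q ! i"

definition fbar :: "nat \<Rightarrow> (nat \<Rightarrow> nat) list set \<Rightarrow> nat \<Rightarrow> ((nat \<Rightarrow> nat) \<times> nat) list
    \<Rightarrow> ((nat \<Rightarrow> nat) \<times> nat) list" where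
  "fbar h F i Q = Q[i := (THE z. other_mid h F i Q z)]"

definition iTS :: "(nat \<Rightarrow> nat) list \<Rightarrow> ((nat \<Rightarrow> nat) \<times> nat) list" where
  "iTS p = zip p [0..<length p]"

end

theory Submission
  imports Defs
begin


definition invs :: "nat \<Rightarrow> (nat\<Rightarrow>nat) \<Rightarrow> (nat\<times>nat) set" where
 "invs n x = {(i,j). i \<in> {1..n} \<and> j \<in> {1..n} \<and> i < j \<and> x j < x i}"

lemma finite_invs: "finite (invs n x)"
  by (rule finite_subset[of _ "{1..n}\<times>{1..n}"]) (auto simp: invs_def)

lemma invs_grow:
  assumes x: "x permutes {1..n}" and ab: "a \<in> {1..n}" "b \<in> {1..n}" "a < b"
    and pq: "inv x a < inv x b"
  shows "card (invs n x) < card (invs n (Transposition.transpose a b \<circ> x))"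
proof -
  define p where "p = inv x a"
  define q where "q = inv x b"
  have xp: "x p = a" and xq: "x q = b" unfolding p_def q_def using permutes_inverses[OF x] by auto
  have pn: "p \<in> {1..n}" "q \<in> {1..n}" unfolding p_def q_def
    using ab permutes_in_image[OF permutes_inv[OF x]] by auto
  have pq': "p < q" using pq p_def q_def by simp
  have inj: "\<And>i j. x i = x j \<Longrightarrow> i = j" using permutes_inj[OF x] by (meson injD)
  let ?y = "Transposition.transpose a b \<circ> x"
  define \<phi> where "\<phi> = (\<lambda>(i::nat,j::nat). if j = p \<and> a < x i \<and> x i < b then (i,q)
      else if i = q \<and> a < x j \<and> x j < b then (p,j) else (i,j))"
  have ipq: "\<And>k. x k = a \<longleftrightarrow> k = p" "\<And>k. x k = b \<longleftrightarrow> k = q" using inj xp xq by auto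
  have maps: "\<phi> ` invs n x \<subseteq> invs n ?y - {(p,q)}"
  proof
    fix z assume "z \<in> \<phi> ` invs n x"
    then obtain i j where ij: "(i,j) \<in> invs n x" and z: "z = \<phi> (i,j)" by auto
    have ij1: "i \<in> {1..n}" "j \<in> {1..n}" "i < j" "x j < x i" using ij by (auto simp: invs_def)
    show "z \<in> invs n ?y - {(p,q)}"
      using ij1 pq' pn ab ipq[of i] ipq[of j] xp xq unfolding z \<phi>_def invs_def
      by (auto simp: transpose_def split: if_splits)
  qed
  have injphi: "inj_on \<phi> (invs n x)"
  proof (rule inj_onI)
    fix z1 z2 assume z1: "z1 \<in> invs n x" and z2: "z2 \<in> invs n x" and e: "\<phi> z1 = \<phi> z2"
    obtain i j where [simp]: "z1 = (i,j)" by (cases z1)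
    obtain k l where [simp]: "z2 = (k,l)" by (cases z2)
    show "z1 = z2" using z1 z2 e pq' ipq[of i] ipq[of j] ipq[of k] ipq[of l]
      unfolding \<phi>_def invs_def by (auto split: if_splits)
  qed
  have "card (invs n x) \<le> card (invs n ?y - {(p,q)})"
    by (rule card_inj_on_le[OF injphi maps]) (simp add: finite_invs)
  moreover have "(p,q) \<in> invs n ?y" using pn pq' xp xq ab by (auto simp: invs_def)
  ultimately show ?thesis using finite_invs[of n ?y]
    by (metis card_Diff1_less le_less_trans)
qed

lemma transp_order:
  assumes "u \<noteq> v" "\<not> (u = s \<and> v = Suc s)" "\<not> (u = Suc s \<and> v = s)"
  shows "Transposition.transpose s (Suc s) u < Transposition.transpose s (Suc s) v \<longleftrightarrow> u < v"
  using assms by (auto simp: transpose_def)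

lemma invs_adj:
  assumes y: "y permutes {1..n}"
  shows "card (invs n (Transposition.transpose s (Suc s) \<circ> y)) \<le> card (invs n y) + 1"
proof -
  have inj: "\<And>i j. y i = y j \<Longrightarrow> i = j" using permutes_inj[OF y] by (meson injD)
  have yi: "\<And>k. y (inv y k) = k" using permutes_inverses[OF y] by auto
  have "invs n (Transposition.transpose s (Suc s) \<circ> y) \<subseteq> insert (inv y s, inv y (Suc s)) (invs n y)"
  proof
    fix z assume z: "z \<in> invs n (Transposition.transpose s (Suc s) \<circ> y)"
    obtain i j where [simp]: "z = (i,j)" by (cases z)
    have h: "i \<in> {1..n}" "j \<in> {1..n}" "i < j"
      "Transposition.transpose s (Suc s) (y j) < Transposition.transpose s (Suc s) (y i)"
      using z by (auto simp: invs_def)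
    have ne: "y i \<noteq> y j" using inj h(3) by fastforce
    show "z \<in> insert (inv y s, inv y (Suc s)) (invs n y)"
    proof (cases "(y j = s \<and> y i = Suc s) \<or> (y j = Suc s \<and> y i = s)")
      case True
      then show ?thesis using h(4)
        by (metis Suc_n_not_le_n \<open>z = (i, j)\<close> insert_iff inj yi less_imp_le_nat transpose_apply_first transpose_apply_second)
    next
      case False
      then have "y j < y i" using h(4) transp_order[of "y j" "y i" s] ne by auto
      then show ?thesis using h by (auto simp: invs_def)
    qed
  qed
  then have "card (invs n (Transposition.transpose s (Suc s) \<circ> y)) \<le> card (insert (inv y s, inv y (Suc s)) (invs n y))"
    by (intro card_mono) (auto simp: finite_invs)
  also have "\<dots> \<le> card (invs n y) + 1" by (simp add: card_insert_if finite_invs)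
  finally show ?thesis .
qed

abbreviation "stp s acc \<equiv> Transposition.transpose s (Suc s) \<circ> acc"

lemma rep_permutes: "set ss \<subseteq> {1..<n} \<Longrightarrow> foldr stp ss id permutes {1..n}"
proof (induction ss)
  case Nil then show ?case by (auto simp: permutes_def)
next
  case (Cons s ss)
  have e: "foldr stp (s#ss) id = stp s (foldr stp ss id)" by simp
  have ss: "set ss \<subseteq> {1..<n}" "s \<in> {1..<n}" using Cons.prems by auto
  show ?case unfolding e
    by (rule permutes_compose[OF Cons.IH[OF ss(1)] permutes_swap_id]) (use ss(2) in auto)
qed

lemma rep_card: "set ss \<subseteq> {1..<n} \<Longrightarrow> card (invs n (foldr stp ss id)) \<le> length ss"
proof (induction ss)
  case Nil
  have "invs n (foldr stp [] id) = {}" by (auto simp: invs_def)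
  then show ?case by (simp only: card.empty)
next
  case (Cons s ss)
  then have "card (invs n (stp s (foldr stp ss id))) \<le> card (invs n (foldr stp ss id)) + 1"
    using invs_adj rep_permutes by auto
  moreover have e: "foldr stp (s#ss) id = stp s (foldr stp ss id)" by simp
  moreover have ss: "set ss \<subseteq> {1..<n}" using Cons.prems by auto
  ultimately show ?case using Cons.IH[OF ss] by (simp only: e list.size)
qed

lemma descent:
  assumes x: "x permutes {1..n}" and nid: "x \<noteq> id"
  shows "\<exists>s \<in> {1..<n}. inv x (Suc s) < inv x s"
proof (rule ccontr)
  assume nt: "\<not> (\<exists>s \<in> {1..<n}. inv x (Suc s) < inv x s)"
  define P where "P = inv x"
  have Pp: "P permutes {1..n}" unfolding P_def by (rule permutes_inv[OF x])
  have injP: "\<And>i j. P i = P j \<Longrightarrow> i = j" using permutes_inj[OF Pp] by (meson injD)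
  have mono: "\<And>s. s \<in> {1..<n} \<Longrightarrow> P s < P (Suc s)"
  proof -
    fix s assume s: "s \<in> {1..<n}"
    have "\<not> P (Suc s) < P s" using nt s unfolding P_def by blast
    moreover have "P s \<noteq> P (Suc s)" using injP[of s "Suc s"] by auto
    ultimately show "P s < P (Suc s)" by simp
  qed
  have inr: "\<And>k. k \<in> {1..n} \<Longrightarrow> P k \<in> {1..n}" using permutes_in_image[OF Pp] by auto
  have ge: "\<And>k. k \<in> {1..n} \<Longrightarrow> k \<le> P k"
  proof -
    fix k show "k \<in> {1..n} \<Longrightarrow> k \<le> P k"
    proof (induction k)
      case 0 then show ?case by simp
    next
      case (Suc k)
      show ?case
      proof (cases "k = 0")
        case True then show ?thesis using inr[OF Suc.prems] by auto
      next
        case False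
        then have "k \<le> P k" using Suc by auto
        moreover have "P k < P (Suc k)" using mono[of k] Suc.prems False by auto
        ultimately show ?thesis by simp
      qed
    qed
  qed
  have le: "\<And>d. d < n \<Longrightarrow> P (n - d) \<le> n - d"
  proof -
    fix d show "d < n \<Longrightarrow> P (n - d) \<le> n - d"
    proof (induction d)
      case 0 then show ?case using inr[of n] by auto
    next
      case (Suc d)
      then have "P (n - d) \<le> n - d" by simp
      moreover have "P (n - Suc d) < P (Suc (n - Suc d))" using mono[of "n - Suc d"] Suc.prems by auto
      moreover have "Suc (n - Suc d) = n - d" using Suc.prems by auto
      ultimately show ?case by simp
    qed
  qed
  have "\<And>k. P k = k"
  proof -
    fix k show "P k = k"
    proof (cases "k \<in> {1..n}")
      case True
      then have "P (n - (n - k)) \<le> n - (n - k)" using le[of "n-k"] by auto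
      then show ?thesis using ge[OF True] True by auto
    next
      case False then show ?thesis using permutes_not_in[OF Pp] by auto
    qed
  qed
  then have "P = id" by auto
  then have "x = id" unfolding P_def
    by (metis inv_id inv_inv_eq permutes_bij[OF x])
  then show False using nid by simp
qed

lemma inv_stp: "x permutes S \<Longrightarrow> inv (Transposition.transpose a b \<circ> x) = inv x \<circ> Transposition.transpose a b"
  by (simp add: o_inv_distrib permutes_bij)

lemma rep_exists:
  "x permutes {1..n} \<Longrightarrow> \<exists>ss. length ss \<le> card (invs n x) \<and> set ss \<subseteq> {1..<n} \<and> x = foldr stp ss id"
proof (induction "card (invs n x)" arbitrary: x rule: less_induct)
  case less
  show ?case
  proof (cases "x = id")
    case True then show ?thesis by (intro exI[of _ "[]"]) auto
  next
    case False
    then obtain s where s: "s \<in> {1..<n}" "inv x (Suc s) < inv x s" using descent less.prems by blast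
    define y where "y = stp s x"
    have yp: "y permutes {1..n}" unfolding y_def using s less.prems
      by (auto intro!: permutes_compose permutes_swap_id)
    have xy: "x = stp s y" unfolding y_def by (simp add: comp_assoc[symmetric])
    have "inv y s < inv y (Suc s)" unfolding y_def using s inv_stp[OF less.prems] by simp
    then have "card (invs n y) < card (invs n x)" using invs_grow[OF yp, of s "Suc s"] s xy by auto
    then obtain ss where ss: "length ss \<le> card (invs n y)" "set ss \<subseteq> {1..<n}" "y = foldr stp ss id"
      using less.hyps yp by blast
    show ?thesis using ss s xy \<open>card (invs n y) < card (invs n x)\<close>
      by (intro exI[of _ "s # ss"]) auto
  qed
qed

lemma len_eq: assumes "x \<in> Sym n" shows "len n x = card (invs n x)"
proof -
  have xp: "x permutes {1..n}" using assms by (simp add: Sym_def)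
  obtain ss where ss: "length ss \<le> card (invs n x)" "set ss \<subseteq> {1..<n}" "x = foldr stp ss id"
    using rep_exists[OF xp] by blast
  let ?Q = "\<lambda>k. \<exists>ss. length ss = k \<and> set ss \<subseteq> {1..<n} \<and> x = foldr stp ss id"
  have Q: "?Q (length ss)" using ss by blast
  have l: "len n x = (LEAST k. ?Q k)" unfolding len_def by simp
  have "(LEAST k. ?Q k) \<le> length ss" using Q by (rule Least_le)
  moreover obtain ss' where "length ss' = (LEAST k. ?Q k)" "set ss' \<subseteq> {1..<n}" "x = foldr stp ss' id"
    using LeastI[of ?Q, OF Q] by blast
  then have "card (invs n x) \<le> (LEAST k. ?Q k)" using rep_card by metis
  ultimately show ?thesis using l ss by linarith
qed

definition okx :: "(nat \<Rightarrow> nat) \<Rightarrow> nat \<Rightarrow> nat \<Rightarrow> bool" where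
  "okx x a b \<longleftrightarrow> (a < b \<longleftrightarrow> inv x a < inv x b)"

lemma len_crit:
  assumes x: "x \<in> Sym n" and ab: "a \<in> {1..n}" "b \<in> {1..n}" "a \<noteq> b"
  shows "len n x < len n (Transposition.transpose a b \<circ> x) \<longleftrightarrow> okx x a b"
proof -
  have xp: "x permutes {1..n}" using x by (simp add: Sym_def)
  let ?t = "Transposition.transpose a b"
  have yp: "?t \<circ> x permutes {1..n}" using xp ab by (auto intro!: permutes_compose permutes_swap_id)
  have y: "?t \<circ> x \<in> Sym n" using yp by (simp add: Sym_def)
  have injI: "inv x a \<noteq> inv x b" using ab permutes_inverses[OF xp] by metis
  have bk: "?t \<circ> (?t \<circ> x) = x" by (simp add: comp_assoc[symmetric])
  have invy: "inv (?t \<circ> x) = inv x \<circ> ?t" by (rule inv_stp[OF xp])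
  have G: "\<And>a b. a \<in> {1..n} \<Longrightarrow> b \<in> {1..n} \<Longrightarrow> a < b \<Longrightarrow> (okx x a b \<longleftrightarrow> card (invs n x) < card (invs n (Transposition.transpose a b \<circ> x)))"
  proof -
    fix a b assume ab: "a \<in> {1..n}" "b \<in> {1..n}" "a < b"
    let ?t = "Transposition.transpose a b"
    have yp: "?t \<circ> x permutes {1..n}" using xp ab by (auto intro!: permutes_compose permutes_swap_id)
    have injI: "inv x a \<noteq> inv x b" using ab permutes_inverses[OF xp] by (metis less_irrefl)
    have bk: "?t \<circ> (?t \<circ> x) = x" by (simp add: comp_assoc[symmetric])
    have invy: "inv (?t \<circ> x) = inv x \<circ> ?t" by (rule inv_stp[OF xp])
    show "okx x a b \<longleftrightarrow> card (invs n x) < card (invs n (?t \<circ> x))"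
    proof
      assume "okx x a b" then show "card (invs n x) < card (invs n (?t \<circ> x))"
        using invs_grow[OF xp ab] ab by (simp add: okx_def)
    next
      assume c: "card (invs n x) < card (invs n (?t \<circ> x))"
      show "okx x a b"
      proof (rule ccontr)
        assume "\<not> okx x a b"
        then have "inv (?t \<circ> x) a < inv (?t \<circ> x) b" using ab injI invy by (auto simp: okx_def)
        then have "card (invs n (?t \<circ> x)) < card (invs n (?t \<circ> (?t \<circ> x)))"
          using invs_grow[OF yp ab] by simp
        then show False using c bk by simp
      qed
    qed
  qed
  show ?thesis
  proof (cases "a < b")
    case True then show ?thesis using G[OF ab(1,2) True] len_eq[OF x] len_eq[OF y] by simp
  next
    case False
    then have ba: "b < a" using ab by simp
    have "okx x a b = okx x b a" using injI ab unfolding okx_def by auto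
    moreover have "?t = Transposition.transpose b a" by (simp add: transpose_commute)
    ultimately show ?thesis using G[OF ab(2,1) ba] len_eq[OF x] len_eq[OF y] by simp
  qed
qed


abbreviation "T \<equiv> Transposition.transpose"

lemma T_moved: "T g h z = w \<Longrightarrow> z \<noteq> w \<Longrightarrow> {g,h} = {z,w}"
  by (auto simp: transpose_eq_iff)

lemma T_pair: "{g,h} = {z,w} \<Longrightarrow> T g h = T z w"
  by (metis doubleton_eq_iff transpose_commute)

lemma G1a:
  assumes "a\<noteq>b" "\<not> ({a,b}={c,d})" "e\<noteq>f"
   and p: "\<And>z. T c d (T a b z) = T g h (T e f z)"
   and e: "e \<notin> {a,b,c,d}"
  shows False
proof -
  have "T g h f = e" using p[of e] e by simp
  then have "{g,h} = {f,e}" using T_moved assms(3) by metis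
  then have "T g h = T e f" using T_pair by (metis insert_commute)
  then have "T c d b = a" using p[of a] by simp
  then have "{c,d} = {b,a}" using T_moved assms(1) by metis
  then show False using assms(2) by (metis insert_commute)
qed

lemma G1:
  assumes "a\<noteq>b" "\<not> ({a,b}={c,d})" "e\<noteq>f"
   and eq: "T c d \<circ> T a b = T g h \<circ> T e f"
  shows "e \<in> {a,b,c,d} \<and> f \<in> {a,b,c,d}"
proof -
  have p: "\<And>z. T c d (T a b z) = T g h (T e f z)" using eq by (metis comp_apply)
  have p': "\<And>z. T c d (T a b z) = T g h (T f e z)" using p by (simp add: transpose_commute)
  show ?thesis using G1a[OF assms(1,2,3) p] G1a[of a b c d f e g h, OF assms(1,2) _ p'] assms(3) by blast
qed

lemma G2a:
  assumes "a\<noteq>b" "c\<noteq>d" "e\<noteq>f" "a \<notin> {c,d}" "b \<notin> {c,d}"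
   and p: "\<And>z. T c d (T a b z) = T g h (T e f z)"
   and ef: "e \<in> {a,b}" "f \<in> {c,d}"
  shows False
proof -
  define W where "W = (\<lambda>z. T c d (T a b z))"
  have We: "W e \<in> {a,b}" "W e \<noteq> e" using ef assms(1-5) unfolding W_def by auto
  have Wf: "W f \<in> {c,d}" "W f \<noteq> f" using ef assms(1-5) unfolding W_def by auto
  have "T g h f = W e" using p[of e] unfolding W_def by simp
  then have gh: "{g,h} = {f, W e}" using T_moved We Wf ef assms by (metis insert_iff singletonD)
  have "W f = T g h e" using p[of f] unfolding W_def by simp
  also have "\<dots> = e" using gh We(2) assms(3) by (metis doubleton_eq_iff transpose_apply_other)
  finally show False using Wf ef assms(4,5) by auto
qed

lemma G2:
  assumes "a\<noteq>b" "c\<noteq>d" "e\<noteq>f" "a \<notin> {c,d}" "b \<notin> {c,d}"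
   and eq: "T c d \<circ> T a b = T g h \<circ> T e f"
  shows "{e,f} = {a,b} \<or> {e,f} = {c,d}"
proof -
  have p: "\<And>z. T c d (T a b z) = T g h (T e f z)" using eq by (metis comp_apply)
  have p': "\<And>z. T c d (T a b z) = T g h (T f e z)" using p by (simp add: transpose_commute)
  have ne: "\<not> ({a,b}={c,d})" using assms(4) by auto
  have "e \<in> {a,b,c,d} \<and> f \<in> {a,b,c,d}" using G1[OF assms(1) ne assms(3) eq] .
  moreover have "\<not> (e \<in> {a,b} \<and> f \<in> {c,d})" using G2a[OF assms(1-5) p] by blast
  moreover have "\<not> (f \<in> {a,b} \<and> e \<in> {c,d})" using G2a[of a b c d f e g h, OF assms(1,2) _ assms(4,5) p'] assms(3) by blast
  ultimately show ?thesis using assms by auto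
qed


lemma Sym_perm: "x \<in> Sym n \<Longrightarrow> x permutes {1..n}" by (simp add: Sym_def)

lemma cancel_right: "x permutes S \<Longrightarrow> f \<circ> x = g \<circ> x \<Longrightarrow> f = g"
  by (metis comp_assoc comp_id permutes_inv_o(1))

lemma bedge_iff:
  "bedge n x y \<longleftrightarrow> x \<in> Sym n \<and> (\<exists>a b. a\<in>{1..n} \<and> b\<in>{1..n} \<and> a\<noteq>b \<and> y = T a b \<circ> x \<and> okx x a b)"
proof
  assume be: "bedge n x y"
  then have x: "x \<in> Sym n" and y: "y \<in> Sym n" and t: "y \<circ> inv x \<in> Transp n" and l: "len n x < len n y"
    by (auto simp: bedge_def)
  obtain a b where ab: "y \<circ> inv x = T a b" "a\<in>{1..n}" "b\<in>{1..n}" "a\<noteq>b" using t by (auto simp: Transp_def)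
  have "y = y \<circ> inv x \<circ> x" using permutes_inv_o(2)[OF Sym_perm[OF x]] by (simp add: comp_assoc)
  then have yy: "y = T a b \<circ> x" using ab by simp
  then have "okx x a b" using len_crit[OF x ab(2-4)] l by simp
  then show "x \<in> Sym n \<and> (\<exists>a b. a\<in>{1..n} \<and> b\<in>{1..n} \<and> a\<noteq>b \<and> y = T a b \<circ> x \<and> okx x a b)"
    using x yy ab by blast
next
  assume "x \<in> Sym n \<and> (\<exists>a b. a\<in>{1..n} \<and> b\<in>{1..n} \<and> a\<noteq>b \<and> y = T a b \<circ> x \<and> okx x a b)"
  then obtain a b where x: "x \<in> Sym n" and ab: "a\<in>{1..n}" "b\<in>{1..n}" "a\<noteq>b" "y = T a b \<circ> x" "okx x a b"
    by blast
  have y: "y \<in> Sym n" using ab Sym_perm[OF x] by (auto simp: Sym_def intro!: permutes_compose permutes_swap_id)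
  have "y \<circ> inv x = T a b" using ab(4) permutes_inv_o(1)[OF Sym_perm[OF x]] by (simp add: comp_assoc)
  then have "y \<circ> inv x \<in> Transp n" using ab by (auto simp: Transp_def)
  moreover have "len n x < len n y" using len_crit[OF x ab(1-3)] ab by simp
  ultimately show "bedge n x y" using x y by (simp add: bedge_def)
qed

lemma bedge_T:
  assumes "x \<in> Sym n" "a\<in>{1..n}" "b\<in>{1..n}" "a\<noteq>b"
  shows "bedge n x (T a b \<circ> x) \<longleftrightarrow> okx x a b"
proof
  assume "bedge n x (T a b \<circ> x)"
  then show "okx x a b" using len_crit[OF assms] by (simp add: bedge_def)
next
  assume "okx x a b"
  then show "bedge n x (T a b \<circ> x)" using assms bedge_iff by blast
qed

lemma T_Sym: "x \<in> Sym n \<Longrightarrow> a\<in>{1..n} \<Longrightarrow> b\<in>{1..n} \<Longrightarrow> T a b \<circ> x \<in> Sym n"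
  by (auto simp: Sym_def intro!: permutes_compose permutes_swap_id)

lemma okx_T:
  assumes "x \<in> Sym n"
  shows "okx (T a b \<circ> x) c d \<longleftrightarrow> (c < d \<longleftrightarrow> inv x (T a b c) < inv x (T a b d))"
  using inv_stp[OF Sym_perm[OF assms]] by (simp add: okx_def)

lemma T_ne:
  assumes "x \<in> Sym n" "T a b e \<noteq> T c d e"
  shows "T a b \<circ> x \<noteq> T c d \<circ> x"
  using cancel_right[OF Sym_perm[OF assms(1)]] assms(2) by metis

lemma mid_form:
  assumes "bedge n x z'" "bedge n z' y" "y = T c d \<circ> T a b \<circ> x"
  shows "\<exists>e f g h. z' = T e f \<circ> x \<and> e \<noteq> f \<and> g \<noteq> h \<and> e\<in>{1..n} \<and> f \<in> {1..n} \<and> T c d \<circ> T a b = T g h \<circ> T e f"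
proof -
  obtain e f where ef: "x \<in> Sym n" "e\<in>{1..n}" "f\<in>{1..n}" "e\<noteq>f" "z' = T e f \<circ> x"
    using assms(1) bedge_iff by blast
  obtain g h where gh: "g \<noteq> h" "y = T g h \<circ> z'" using assms(2) bedge_iff by blast
  have "T c d \<circ> T a b \<circ> x = T g h \<circ> T e f \<circ> x" using gh ef assms(3) by (simp add: comp_assoc)
  then have "T c d \<circ> T a b = T g h \<circ> T e f" by (rule cancel_right[OF Sym_perm[OF ef(1)]])
  then show ?thesis using ef gh by blast
qed

lemma len_lt: "bedge n x y \<Longrightarrow> len n x < len n y" by (simp add: bedge_def)

lemma M_disj:
  assumes x: "x \<in> Sym n" and ab: "a\<in>{1..n}" "b\<in>{1..n}" "a\<noteq>b" "okx x a b"
    and cd: "c\<in>{1..n}" "d\<in>{1..n}" "c\<noteq>d" "okx (T a b \<circ> x) c d"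
    and disj: "a \<notin> {c,d}" "b \<notin> {c,d}"
    and y: "y = T c d \<circ> (T a b \<circ> x)"
  shows "\<exists>!z'. z' \<noteq> T a b \<circ> x \<and> bedge n x z' \<and> bedge n z' y"
proof -
  let ?z = "T a b \<circ> x"
  let ?z1 = "T c d \<circ> x"
  have "okx (T a b \<circ> x) c d \<longleftrightarrow> (c < d \<longleftrightarrow> inv x (T a b c) < inv x (T a b d))" by (rule okx_T[OF x])
  then have okcd: "okx x c d" using cd(4) disj by (simp add: okx_def)
  have comm: "T c d \<circ> T a b = T a b \<circ> T c d" using disj ab(3) cd(3)
    by (auto simp: fun_eq_iff transpose_def)
  have z1: "bedge n x ?z1" using bedge_T[OF x cd(1-3)] okcd by simp
  have z1y: "bedge n ?z1 y"
  proof -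
    have "y = T a b \<circ> ?z1" by (simp add: y comp_assoc[symmetric] comm)
    moreover have "okx ?z1 a b \<longleftrightarrow> (a < b \<longleftrightarrow> inv x (T c d a) < inv x (T c d b))" by (rule okx_T[OF x])
    then have "okx ?z1 a b" using ab(4) disj by (simp add: okx_def)
    ultimately show ?thesis using bedge_T[OF T_Sym[OF x cd(1,2)] ab(1-3)] by simp
  qed
  have z1z: "?z1 \<noteq> ?z" by (rule T_ne[OF x, where e=a]) (use disj ab(3) in auto)
  show ?thesis
  proof (rule ex1I[of _ ?z1])
    show "?z1 \<noteq> ?z \<and> bedge n x ?z1 \<and> bedge n ?z1 y" using z1 z1y z1z by simp
  next
    fix z' assume z': "z' \<noteq> ?z \<and> bedge n x z' \<and> bedge n z' y"
    obtain e f g h where efgh: "z' = T e f \<circ> x" "e \<noteq> f" "g \<noteq> h" "T c d \<circ> T a b = T g h \<circ> T e f"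
    proof -
      have yy: "y = T c d \<circ> T a b \<circ> x" using y by (simp only: comp_assoc)
      show ?thesis using mid_form[OF _ _ yy] z' that by blast
    qed
    have "{e,f} = {a,b} \<or> {e,f} = {c,d}" by (rule G2[of a b c d e f g h]) (use ab(3) cd(3) efgh(2,3) disj efgh(4) in simp_all)
    then show "z' = ?z1"
    proof
      assume "{e,f} = {a,b}" then have "T e f = T a b" by (rule T_pair)
      then show ?thesis using z' efgh by simp
    next
      assume "{e,f} = {c,d}" then have "T e f = T c d" by (rule T_pair)
      then show ?thesis using efgh by simp
    qed
  qed
qed

lemma logic3:
  fixes a b c pa pb pc :: nat
  assumes "a \<noteq> b" "b \<noteq> c" "a \<noteq> c" "pa \<noteq> pb" "pb \<noteq> pc" "pa \<noteq> pc"
    "a < b \<longleftrightarrow> pa < pb" "b < c \<longleftrightarrow> pa < pc"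
  shows "((a < c \<longleftrightarrow> pa < pc) \<and> (a < b \<longleftrightarrow> pc < pb)) \<longleftrightarrow> \<not> ((b < c \<longleftrightarrow> pb < pc) \<and> (a < c \<longleftrightarrow> pa < pb))"
  using assms by linarith

lemma M_three:
  assumes x: "x \<in> Sym n" and abc: "a\<in>{1..n}" "b\<in>{1..n}" "c\<in>{1..n}" "a\<noteq>b" "b\<noteq>c" "a\<noteq>c"
    and ok1: "okx x a b" and ok2: "okx (T a b \<circ> x) b c"
    and y: "y = T b c \<circ> (T a b \<circ> x)"
  shows "\<exists>!z'. z' \<noteq> T a b \<circ> x \<and> bedge n x z' \<and> bedge n z' y"
proof -
  define P where "P = inv x"
  have Pinj: "\<And>i j. P i = P j \<Longrightarrow> i = j" unfolding P_def
    using permutes_inverses(1)[OF Sym_perm[OF x]] by metis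
  let ?z = "T a b \<circ> x"
  let ?z1 = "T a c \<circ> x"
  let ?z2 = "T b c \<circ> x"
  have e1: "T b c \<circ> T a b = T a b \<circ> T a c" using abc by (auto simp: fun_eq_iff transpose_def)
  have e2: "T b c \<circ> T a b = T a c \<circ> T b c" using abc by (auto simp: fun_eq_iff transpose_def)
  have y1: "y = T a b \<circ> ?z1" by (simp add: y comp_assoc[symmetric] e1)
  have y2: "y = T a c \<circ> ?z2" by (simp add: y comp_assoc[symmetric] e2)
  have h2: "b < c \<longleftrightarrow> P a < P c" using ok2 okx_T[OF x] abc unfolding P_def by simp
  have h1: "a < b \<longleftrightarrow> P a < P b" using ok1 unfolding P_def okx_def .
  have C1: "bedge n x ?z1 \<and> bedge n ?z1 y \<longleftrightarrow> (a < c \<longleftrightarrow> P a < P c) \<and> (a < b \<longleftrightarrow> P c < P b)"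
    using bedge_T[OF x abc(1,3,6)] bedge_T[OF T_Sym[OF x abc(1,3)] abc(1,2,4)] y1 okx_T[OF x, of a c a b] abc
    unfolding P_def okx_def by simp
  have C2: "bedge n x ?z2 \<and> bedge n ?z2 y \<longleftrightarrow> (b < c \<longleftrightarrow> P b < P c) \<and> (a < c \<longleftrightarrow> P a < P b)"
    using bedge_T[OF x abc(2,3,5)] bedge_T[OF T_Sym[OF x abc(2,3)] abc(1,3,6)] y2 okx_T[OF x, of b c a c] abc
    unfolding P_def okx_def by simp
  have X: "(bedge n x ?z1 \<and> bedge n ?z1 y) \<longleftrightarrow> \<not> (bedge n x ?z2 \<and> bedge n ?z2 y)"
    unfolding C1 C2 by (rule logic3) (use abc h1 h2 Pinj in auto)
  have n1: "?z1 \<noteq> ?z" by (rule T_ne[OF x, where e=c]) (use abc in auto)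
  have n2: "?z2 \<noteq> ?z" by (rule T_ne[OF x, where e=c]) (use abc in auto)
  have n12: "?z1 \<noteq> ?z2" by (rule T_ne[OF x, where e=a]) (use abc in auto)
  have sub: "\<And>z'. bedge n x z' \<Longrightarrow> bedge n z' y \<Longrightarrow> z' \<in> {?z, ?z1, ?z2}"
  proof -
    fix z' assume "bedge n x z'" "bedge n z' y"
    then obtain e f g h where efgh: "z' = T e f \<circ> x" "e \<noteq> f" "g \<noteq> h" "T b c \<circ> T a b = T g h \<circ> T e f"
    proof -
      have yy: "y = T b c \<circ> T a b \<circ> x" using y by (simp only: comp_assoc)
      show ?thesis using mid_form[OF _ _ yy] \<open>bedge n x z'\<close> \<open>bedge n z' y\<close> that by blast
    qed
    have nab: "\<not> ({a,b} = {b,c})" using abc by (auto simp: doubleton_eq_iff)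
    have "e \<in> {a,b,b,c} \<and> f \<in> {a,b,b,c}" by (rule G1[of a b b c e f g h]) (use abc(4) nab efgh(2,4) in simp_all)
    then have "{e,f} = {a,b} \<or> {e,f} = {a,c} \<or> {e,f} = {b,c}" using efgh(2) by auto
    then have "T e f = T a b \<or> T e f = T a c \<or> T e f = T b c" using T_pair[of e f a b] T_pair[of e f a c] T_pair[of e f b c] by blast
    then show "z' \<in> {?z, ?z1, ?z2}" using efgh(1) by auto
  qed
  show ?thesis
  proof (cases "bedge n x ?z1 \<and> bedge n ?z1 y")
    case True
    show ?thesis
    proof (rule ex1I[of _ ?z1])
      show "?z1 \<noteq> ?z \<and> bedge n x ?z1 \<and> bedge n ?z1 y" using True n1 by simp
    next
      fix z' assume z': "z' \<noteq> ?z \<and> bedge n x z' \<and> bedge n z' y"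
      then have "z' \<in> {?z, ?z1, ?z2}" using sub by blast
      then show "z' = ?z1" using z' True X by auto
    qed
  next
    case False
    then have T2: "bedge n x ?z2 \<and> bedge n ?z2 y" using X by simp
    show ?thesis
    proof (rule ex1I[of _ ?z2])
      show "?z2 \<noteq> ?z \<and> bedge n x ?z2 \<and> bedge n ?z2 y" using T2 n2 by simp
    next
      fix z' assume z': "z' \<noteq> ?z \<and> bedge n x z' \<and> bedge n z' y"
      then have "z' \<in> {?z, ?z1, ?z2}" using sub by blast
      then show "z' = ?z2" using z' False by auto
    qed
  qed
qed

lemma okx_sym: "x \<in> Sym n \<Longrightarrow> a \<noteq> b \<Longrightarrow> okx x a b = okx x b a"
  unfolding okx_def using permutes_inverses(1)[OF Sym_perm] by (metis linorder_neqE_nat not_less_iff_gr_or_eq)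

lemma M:
  assumes xz: "bedge n x z" and zy: "bedge n z y"
  shows "\<exists>!z'. z' \<noteq> z \<and> bedge n x z' \<and> bedge n z' y"
proof -
  obtain a b where x: "x \<in> Sym n" and ab: "a\<in>{1..n}" "b\<in>{1..n}" "a\<noteq>b" "z = T a b \<circ> x" "okx x a b"
    using xz bedge_iff by blast
  obtain c d where z: "z \<in> Sym n" and cd: "c\<in>{1..n}" "d\<in>{1..n}" "c\<noteq>d" "y = T c d \<circ> z" "okx z c d"
    using zy bedge_iff by blast
  have ne: "\<not> ({a,b} = {c,d})"
  proof
    assume "{a,b} = {c,d}"
    then have "T a b = T c d" by (rule T_pair)
    then have "y = x" using ab(4) cd(4) by (simp add: comp_assoc[symmetric])
    then show False using len_lt[OF xz] len_lt[OF zy] by simp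
  qed
  have ok2: "okx (T a b \<circ> x) c d" using cd(5) ab(4) by simp
  have yy: "y = T c d \<circ> (T a b \<circ> x)" using cd(4) ab(4) by simp
  show ?thesis
  proof (cases "a \<notin> {c,d} \<and> b \<notin> {c,d}")
    case True
    then show ?thesis using M_disj[OF x ab(1-3,5) cd(1-3) ok2 _ _ yy] ab(4) by blast
  next
    case False
    then consider "a = c" | "a = d" | "b = c" | "b = d" by blast
    then show ?thesis
    proof cases
      case 1
      then have bd: "b \<noteq> d" using ne ab(3) by auto
      have e1: "T a b = T b a" by (simp add: transpose_commute)
      have o1: "okx x b a" using okx_sym[OF x ab(3)] ab(5) by simp
      have o2: "okx (T b a \<circ> x) a d" using ok2 e1 1 by simp
      have y': "y = T a d \<circ> (T b a \<circ> x)" using yy e1 1 by simp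
      show ?thesis using M_three[OF x ab(2,1) cd(2) ab(3)[symmetric] _ bd o1 o2 y'] ab(4) e1 1 cd(3) by simp
    next
      case 2
      then have bc: "b \<noteq> c" using ne ab(3) by auto
      have e1: "T a b = T b a" by (simp add: transpose_commute)
      have e2: "T c d = T a c" using 2 by (simp add: transpose_commute)
      have o1: "okx x b a" using okx_sym[OF x ab(3)] ab(5) by simp
      have o2: "okx (T b a \<circ> x) a c" using ok2 e1 e2 2 okx_sym[OF T_Sym[OF x ab(2,1)] cd(3)] by simp
      have y': "y = T a c \<circ> (T b a \<circ> x)" using yy e1 e2 by simp
      show ?thesis using M_three[OF x ab(2,1) cd(1) ab(3)[symmetric] _ bc o1 o2 y'] ab(4) e1 2 cd(3) by simp
    next
      case 3
      then have ad: "a \<noteq> d" using ne ab(3) by auto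
      show ?thesis using M_three[OF x ab(1,2) cd(2) ab(3) _ ad ab(5)] ok2 yy 3 ab(4) cd(3) by simp
    next
      case 4
      then have ac: "a \<noteq> c" using ne ab(3) by auto
      have e2: "T c d = T b c" using 4 by (simp add: transpose_commute)
      have o2: "okx (T a b \<circ> x) b c" using ok2 4 okx_sym[OF T_Sym[OF x ab(1,2)] cd(3)] by simp
      show ?thesis using M_three[OF x ab(1,2) cd(1) ab(3) _ ac ab(5) o2] yy e2 4 ab(4) cd(3) by simp
    qed
  qed
qed



lemma path_edge: "q \<in> Paths n h u v \<Longrightarrow> j < h \<Longrightarrow> bedge n (q ! j) (q ! Suc j)"
  by (simp add: Paths_def)

lemma flip_ok:
  assumes q: "q \<in> Paths n h u v" and i: "i \<in> {1..h-1}"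
  shows "flip n i q \<in> Paths n h u v \<and> flip n i q ! i \<noteq> q ! i \<and>
    bedge n (q ! (i-1)) (flip n i q ! i) \<and> bedge n (flip n i q ! i) (q ! Suc i) \<and>
    flip n i q = q[i := flip n i q ! i]"
proof -
  have ih: "1 \<le> i" "i < h" using i by auto
  have len: "length q = Suc h" using q by (simp add: Paths_def)
  have e1: "bedge n (q ! (i-1)) (q ! i)" using path_edge[OF q, of "i-1"] ih by simp
  have e2: "bedge n (q ! i) (q ! Suc i)" using path_edge[OF q, of i] ih by simp
  let ?P = "\<lambda>z. z \<noteq> q ! i \<and> bedge n (q ! (i - 1)) z \<and> bedge n z (q ! Suc i)"
  have ex: "\<exists>!z. ?P z" using M[OF e1 e2] .
  define W where "W = (THE z. ?P z)"
  have PW: "?P W" unfolding W_def using theI'[OF ex] .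
  have fl: "flip n i q = q[i := W]" unfolding flip_def W_def ..
  have fi: "flip n i q ! i = W" using fl len ih by simp
  have "q[i := W] \<in> Paths n h u v"
    unfolding Paths_def
  proof (intro CollectI conjI allI impI)
    show "length (q[i := W]) = Suc h" using len by simp
    show "q[i := W] ! 0 = u" using q ih by (simp add: Paths_def)
    show "q[i := W] ! h = v" using q ih by (simp add: Paths_def)
    fix j assume j: "j < h"
    show "bedge n (q[i := W] ! j) (q[i := W] ! Suc j)"
    proof (cases "Suc j = i")
      case True
      then show ?thesis using PW len j by auto
    next
      case False
      show ?thesis
      proof (cases "j = i")
        case True then show ?thesis using PW len j by auto
      next
        case False2: False
        then show ?thesis using False path_edge[OF q j] len j by auto
      qed
    qed
  qed
  then show ?thesis using fl fi PW by simp
qed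

lemma F_paths:
  assumes "flipclass n h u v F" "q \<in> F"
  shows "q \<in> Paths n h u v"
proof -
  obtain p where p: "p \<in> Paths n h u v" "F = {q. (p, q) \<in> (flip_step n h u v)\<^sup>*}"
    using assms(1) by (auto simp: flipclass_def)
  have "(p, q) \<in> (flip_step n h u v)\<^sup>*" using assms(2) p by simp
  then show ?thesis
  proof (induction rule: rtrancl_induct)
    case base then show ?case using p by simp
  next
    case (step y z)
    then show ?case using flip_ok by (auto simp: flip_step_def)
  qed
qed

lemma F_flip:
  assumes "flipclass n h u v F" "q \<in> F" "i \<in> {1..h-1}"
  shows "flip n i q \<in> F"
proof -
  obtain p where p: "p \<in> Paths n h u v" "F = {q. (p, q) \<in> (flip_step n h u v)\<^sup>*}"
    using assms(1) by (auto simp: flipclass_def)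
  have "(q, flip n i q) \<in> flip_step n h u v" using F_paths[OF assms(1,2)] assms(3)
    by (auto simp: flip_step_def)
  then show ?thesis using assms(2) p by (auto intro: rtrancl_into_rtrancl)
qed

lemma TSE_snd: "(A, B) \<in> TSE h F \<Longrightarrow> snd B = Suc (snd A)"
  by (auto simp: TSE_def)

lemma TSE_V: "(A, B) \<in> TSE h F \<Longrightarrow> A \<in> TSV h F \<and> B \<in> TSV h F"
  unfolding TSE_def TSV_def by (auto intro: less_imp_le Suc_leI)

lemma relpow_snd: "(A, B) \<in> (TSE h F) ^^ k \<Longrightarrow> snd B = snd A + k"
proof (induction k arbitrary: B)
  case 0 then show ?case by simp
next
  case (Suc k)
  then obtain C where "(A, C) \<in> (TSE h F) ^^ k" "(C, B) \<in> TSE h F" by auto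
  then show ?case using Suc.IH TSE_snd by fastforce
qed

lemma TSPaths_snd: "Q \<in> TSPaths h F u v \<Longrightarrow> j \<le> h \<Longrightarrow> snd (Q ! j) = j"
proof (induction j)
  case 0 then show ?case by (simp add: TSPaths_def)
next
  case (Suc j)
  then have "(Q ! j, Q ! Suc j) \<in> TSE h F" by (simp add: TSPaths_def)
  then show ?case using Suc TSE_snd by fastforce
qed

lemma part1:
  assumes Q: "Q \<in> TSPaths h F u v" and i: "i \<in> {1..h-1}"
    and diamond: "\<forall>i \<in> {1..h-1}. \<forall>a b. (a, i - 1) \<in> TSV h F \<longrightarrow> (b, Suc i) \<in> TSV h F \<longrightarrow>
          TS_interval h F (a, i - 1) (b, Suc i) \<noteq> {} \<longrightarrow>
          card (TS_interval h F (a, i - 1) (b, Suc i)) = 4"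
  shows "(\<exists>!z. other_mid h F i Q z) \<and> fbar h F i Q \<in> TSPaths h F u v"
proof -
  have ih: "1 \<le> i" "i < h" using i by auto
  have len: "length Q = Suc h" using Q by (simp add: TSPaths_def)
  define A where "A = Q ! (i-1)"
  define Mq where "Mq = Q ! i"
  define B where "B = Q ! Suc i"
  have eAM: "(A, Mq) \<in> TSE h F"
  proof -
    have "i - 1 < h" using ih by simp
    then have "(Q ! (i-1), Q ! Suc (i-1)) \<in> TSE h F" using Q by (simp add: TSPaths_def)
    moreover have "Suc (i - 1) = i" using ih by simp
    ultimately show ?thesis unfolding A_def Mq_def by simp
  qed
  have eMB: "(Mq, B) \<in> TSE h F" using Q ih unfolding B_def Mq_def TSPaths_def by simp
  have sA: "snd A = i - 1" unfolding A_def using TSPaths_snd[OF Q] ih by simp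
  have sM: "snd Mq = i" unfolding Mq_def using TSPaths_snd[OF Q] ih by simp
  have sB: "snd B = Suc i" unfolding B_def using TSPaths_snd[OF Q] ih by simp
  have AV: "A \<in> TSV h F" and MV: "Mq \<in> TSV h F" and BV: "B \<in> TSV h F" using TSE_V eAM eMB by blast+
  define I where "I = TS_interval h F A B"
  have AM: "(A, Mq) \<in> (TSE h F)\<^sup>*" "(Mq, B) \<in> (TSE h F)\<^sup>*" using eAM eMB by auto
  have AB: "(A, B) \<in> (TSE h F)\<^sup>*" using AM by (rule rtrancl_trans)
  have AI: "A \<in> I" "B \<in> I" "Mq \<in> I" unfolding I_def TS_interval_def TS_le_def
    using AV MV BV AM AB by auto
  have c4: "card I = 4"
  proof -
    have AA: "A = (fst A, i - 1)" "B = (fst B, Suc i)" using sA sB by (metis prod.collapse)+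
    have "(fst A, i - 1) \<in> TSV h F \<longrightarrow> (fst B, Suc i) \<in> TSV h F \<longrightarrow>
          TS_interval h F (fst A, i - 1) (fst B, Suc i) \<noteq> {} \<longrightarrow>
          card (TS_interval h F (fst A, i - 1) (fst B, Suc i)) = 4" using diamond i by blast
    then show ?thesis using AV BV AI unfolding I_def AA[symmetric] by blast
  qed
  have fin: "finite I" using c4 by (metis card.infinite zero_neq_numeral)
  have dist: "A \<noteq> B" "A \<noteq> Mq" "Mq \<noteq> B" using sA sM sB ih by auto
  have "card (I - {A, B, Mq}) = 1" using c4 fin AI dist
    by (simp add: card_Diff_subset)
  then obtain z0 where z0: "I - {A, B, Mq} = {z0}" by (rule card_1_singletonE)
  have om: "\<And>z. other_mid h F i Q z \<longleftrightarrow> z \<in> I - {A, B, Mq}"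
    unfolding other_mid_def I_def A_def B_def Mq_def by auto
  have ex: "\<exists>!z. other_mid h F i Q z" unfolding om z0 by auto
  have the: "(THE z. other_mid h F i Q z) = z0" unfolding om z0 by auto
  have z0I: "z0 \<in> I" "z0 \<noteq> A" "z0 \<noteq> B" using z0 by auto
  obtain k where k: "(A, z0) \<in> (TSE h F) ^^ k"
    using z0I(1) unfolding I_def TS_interval_def TS_le_def by (auto simp: rtrancl_power)
  obtain m where m: "(z0, B) \<in> (TSE h F) ^^ m"
    using z0I(1) unfolding I_def TS_interval_def TS_le_def by (auto simp: rtrancl_power)
  have k0: "k \<noteq> 0" proof assume "k = 0" then show False using k z0I by simp qed
  have m0: "m \<noteq> 0" proof assume "m = 0" then show False using m z0I by simp qed
  have "snd z0 = snd A + k" "snd B = snd z0 + m" using relpow_snd k m by blast+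
  then have km: "k = 1" "m = 1" using sA sB ih k0 m0 by auto
  have eAz: "(A, z0) \<in> TSE h F" using k km by simp
  have ezB: "(z0, B) \<in> TSE h F" using m km by simp
  have fb: "fbar h F i Q = Q[i := z0]" unfolding fbar_def the ..
  have "Q[i := z0] \<in> TSPaths h F u v"
    unfolding TSPaths_def
  proof (intro CollectI conjI allI impI)
    show "length (Q[i := z0]) = Suc h" using len by simp
    show "Q[i := z0] ! 0 = (u, 0)" using Q ih by (simp add: TSPaths_def)
    show "Q[i := z0] ! h = (v, h)" using Q ih by (simp add: TSPaths_def)
    fix j assume j: "j < h"
    show "(Q[i := z0] ! j, Q[i := z0] ! Suc j) \<in> TSE h F"
    proof (cases "Suc j = i")
      case True
      then have "j = i - 1" by simp
      then show ?thesis using True eAz len j unfolding A_def by auto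
    next
      case False
      show ?thesis
      proof (cases "j = i")
        case True then show ?thesis using ezB len j unfolding B_def by auto
      next
        case False2: False
        then show ?thesis using False Q len j by (auto simp: TSPaths_def)
      qed
    qed
  qed
  then show ?thesis using ex fb by simp
qed

lemma TSE_I: "p \<in> F \<Longrightarrow> j < h \<Longrightarrow> ((p ! j, j), (p ! Suc j, Suc j)) \<in> TSE h F"
  unfolding TSE_def by blast

lemma iTS_len: "length (iTS p) = length p" by (simp add: iTS_def)
lemma iTS_nth: "j < length p \<Longrightarrow> iTS p ! j = (p ! j, j)" by (simp add: iTS_def)

lemma iTS_TSPaths:
  assumes "flipclass n h u v F" "p \<in> F"
  shows "iTS p \<in> TSPaths h F u v"
proof -
  have p: "p \<in> Paths n h u v" by (rule F_paths[OF assms])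
  have len: "length p = Suc h" using p by (simp add: Paths_def)
  show ?thesis unfolding TSPaths_def
  proof (intro CollectI conjI allI impI)
    show "length (iTS p) = Suc h" using len iTS_len by simp
    show "iTS p ! 0 = (u, 0)" using p len by (simp add: iTS_nth Paths_def)
    show "iTS p ! h = (v, h)" using p len by (simp add: iTS_nth Paths_def)
    fix j assume j: "j < h"
    have "((p ! j, j), (p ! Suc j, Suc j)) \<in> TSE h F" using assms(2) j unfolding TSE_def by blast
    then show "(iTS p ! j, iTS p ! Suc j) \<in> TSE h F" using j len by (simp add: iTS_nth)
  qed
qed

theorem lemma5p6:
  fixes n h :: nat and u v :: "nat \<Rightarrow> nat"
    and F :: "(nat \<Rightarrow> nat) list set"
  assumes "u \<in> Sym n" and "v \<in> Sym n"
    and "bruhat_less n u v"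
    and "flipclass n h u v F"
    and diamond: "\<forall>i \<in> {1..h-1}. \<forall>a b. (a, i - 1) \<in> TSV h F \<longrightarrow> (b, Suc i) \<in> TSV h F \<longrightarrow>
          TS_interval h F (a, i - 1) (b, Suc i) \<noteq> {} \<longrightarrow>
          card (TS_interval h F (a, i - 1) (b, Suc i)) = 4"
  shows "(\<forall>Q \<in> TSPaths h F u v. \<forall>i \<in> {1..h-1}.
            (\<exists>!z. other_mid h F i Q z) \<and> fbar h F i Q \<in> TSPaths h F u v)
       \<and> (\<forall>\<Gamma> \<in> F. \<forall>i \<in> {1..h-1}. iTS (flip n i \<Gamma>) = fbar h F i (iTS \<Gamma>))"
proof (rule conjI; intro ballI)
  fix Q i assume "Q \<in> TSPaths h F u v" "i \<in> {1..h-1}"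
  then show "(\<exists>!z. other_mid h F i Q z) \<and> fbar h F i Q \<in> TSPaths h F u v"
    by (rule part1[OF _ _ diamond])
next
  fix G i assume G: "G \<in> F" and i: "i \<in> {1..h-1}"
  have ih: "1 \<le> i" "i < h" using i by auto
  have Gp: "G \<in> Paths n h u v" by (rule F_paths[OF assms(4) G])
  have len: "length G = Suc h" using Gp by (simp add: Paths_def)
  have fo: "flip n i G \<in> Paths n h u v \<and> flip n i G ! i \<noteq> G ! i \<and>
    bedge n (G ! (i-1)) (flip n i G ! i) \<and> bedge n (flip n i G ! i) (G ! Suc i) \<and>
    flip n i G = G[i := flip n i G ! i]" by (rule flip_ok[OF Gp i])
  define W where "W = flip n i G ! i"
  have fl: "flip n i G = G[i := W]" and WG: "W \<noteq> G ! i" using fo unfolding W_def by auto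
  have G'F: "flip n i G \<in> F" by (rule F_flip[OF assms(4) G i])
  have Q: "iTS G \<in> TSPaths h F u v" by (rule iTS_TSPaths[OF assms(4) G])
  have ex: "\<exists>!z. other_mid h F i (iTS G) z" using part1[OF Q i diamond] by blast
  have im1: "i - 1 < length G" "i < length G" "Suc i < length G" using len ih by auto
  have Si: "Suc (i - 1) = i" using ih by simp
  have e1: "((G ! (i-1), i-1), (W, i)) \<in> TSE h F"
  proof -
    have "((flip n i G ! (i-1), i-1), (flip n i G ! Suc (i-1), Suc (i-1))) \<in> TSE h F"
      using G'F ih by (intro TSE_I) auto
    then show ?thesis using Si fl im1 ih by simp
  qed
  have e2: "((W, i), (G ! Suc i, Suc i)) \<in> TSE h F"
  proof -
    have "((flip n i G ! i, i), (flip n i G ! Suc i, Suc i)) \<in> TSE h F"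
      using G'F ih by (intro TSE_I) auto
    then show ?thesis using fl im1 by simp
  qed
  have V: "(G ! (i-1), i-1) \<in> TSV h F" "(W, i) \<in> TSV h F" "(G ! Suc i, Suc i) \<in> TSV h F"
    using TSE_V e1 e2 by blast+
  have om: "other_mid h F i (iTS G) (W, i)"
    unfolding other_mid_def TS_interval_def TS_le_def
    using V e1 e2 WG im1 ih by (auto simp: iTS_nth r_into_rtrancl)
  have the: "(THE z. other_mid h F i (iTS G) z) = (W, i)" using ex om by (rule the1_equality)
  show "iTS (flip n i G) = fbar h F i (iTS G)"
    unfolding fbar_def the fl
  proof (rule nth_equalityI)
    show "length (iTS (G[i := W])) = length ((iTS G)[i := (W, i)])" by (simp add: iTS_len)
    fix j assume "j < length (iTS (G[i := W]))"
    then have j: "j < length G" by (simp add: iTS_len)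
    then show "iTS (G[i := W]) ! j = (iTS G)[i := (W, i)] ! j"
      using im1 by (auto simp: iTS_nth iTS_len nth_list_update)
  qed
qed


end
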